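(* Let $G$ be a graph on $n$ vertices, $t\ge 1$ an integer, and let $G'$, $\alpha$, $\beta$ be as in the construction below, with $k=n+t+1$ and $\ell=2t+2t^2$. If $\mathcal{C}_k(G')$ contains a path from $\alpha$ to $\beta$ of length at most $\ell$, then $G$ has an independent set of size at least $t-1$.
   Context: Construction: with $V(G)=\{v_1,\ldots,v_n\}$, $V(G')=V_G\cup V_B\cup V_C$, where $V_G=\{g_1,\ldots,g_n\}$ induces a copy of $G$ ($g_ig_j$ an edge iff $v_iv_j\in E(G)$); $V_B=\{b^i_j\mid i,j\in\{1,\ldots,t\}\}$ with $b^i_jb^{i'}_{j'}$ an edge iff $i\ne i'$ and $j\ne j'$; all edges between $V_G$ and $V_B$ are present; $V_C=C_1\cup\cdots\cup C_{n+t+1}$ with the $C_i$ pairwise disjoint independent sets of size $2t+2t^2$ and no edges among vertices of $V_C$; each $g_i$ is adjacent to all of $V_C\setminus(C_i\cup C_{n+t+1})$; each vertex of $V_B$ is adjacent to all of $C_{n+t+1}$; no other edges. $\alpha(g_i)=i$, $\alpha(c)=i$ for $c\in C_i$, $\alpha(b^i_j)=n+i$; $\beta(v)=\alpha(v)$ for $v\in V_G\cup V_C$ and $\beta(b^i_j)=n+j$. A $k$-coloring is a map $V\to\{1,\ldots,k\}$ with adjacent vertices colored differently; $\mathcal{C}_k(G')$ is the graph on the $k$-colorings of $G'$, two adjacent iff they differ on exactly one vertex. *)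

theory Defs
  imports Main
begin

definition is_graph :: "nat \<Rightarrow> (nat \<Rightarrow> nat \<Rightarrow> bool) \<Rightarrow> bool" where
  "is_graph n E \<longleftrightarrow> (\<forall>i\<in>{1..n}. \<forall>j\<in>{1..n}. E i j \<longleftrightarrow> E j i) \<and> (\<forall>i\<in>{1..n}. \<not> E i i)"

definition independent_set :: "nat \<Rightarrow> (nat \<Rightarrow> nat \<Rightarrow> bool) \<Rightarrow> nat set \<Rightarrow> bool" where
  "independent_set n E S \<longleftrightarrow> S \<subseteq> {1..n} \<and> (\<forall>i\<in>S. \<forall>j\<in>S. \<not> E i j)"

text \<open>Vertices of G': Gv i = g_i, Bv i j = b^i_j, Cv i m = the m-th vertex of C_i.\<close>
datatype vtx = Gv nat | Bv nat nat | Cv nat nat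

definition Vset :: "nat \<Rightarrow> nat \<Rightarrow> vtx set" where
  "Vset n t = Gv ` {1..n} \<union> {Bv i j | i j. i \<in> {1..t} \<and> j \<in> {1..t}}
     \<union> {Cv i m | i m. i \<in> {1..n+t+1} \<and> m \<in> {1..2*t+2*t^2}}"

text \<open>One-directional edge description; adjacency of G' is its symmetric closure.\<close>
fun edge0 :: "nat \<Rightarrow> (nat \<Rightarrow> nat \<Rightarrow> bool) \<Rightarrow> nat \<Rightarrow> vtx \<Rightarrow> vtx \<Rightarrow> bool" where
  "edge0 n E t (Gv i) (Gv j) = E i j"
| "edge0 n E t (Bv i j) (Bv i' j') = (i \<noteq> i' \<and> j \<noteq> j')"
| "edge0 n E t (Gv i) (Bv _ _) = True"
| "edge0 n E t (Gv i) (Cv j _) = (j \<noteq> i \<and> j \<noteq> n+t+1)"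
| "edge0 n E t (Bv _ _) (Cv j _) = (j = n+t+1)"
| "edge0 n E t _ _ = False"

definition adj :: "nat \<Rightarrow> (nat \<Rightarrow> nat \<Rightarrow> bool) \<Rightarrow> nat \<Rightarrow> vtx \<Rightarrow> vtx \<Rightarrow> bool" where
  "adj n E t u v \<longleftrightarrow> u \<in> Vset n t \<and> v \<in> Vset n t \<and> (edge0 n E t u v \<or> edge0 n E t v u)"

text \<open>A k-colouring of G': a map V(G') \<rightarrow> {1..k} (represented extensionally,
value 0 outside V(G')) with adjacent vertices coloured differently.\<close>
definition is_coloring :: "nat \<Rightarrow> (nat \<Rightarrow> nat \<Rightarrow> bool) \<Rightarrow> nat \<Rightarrow> nat \<Rightarrow> (vtx \<Rightarrow> nat) \<Rightarrow> bool" where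
  "is_coloring n E t k f \<longleftrightarrow>
     (\<forall>v\<in>Vset n t. f v \<in> {1..k}) \<and> (\<forall>v. v \<notin> Vset n t \<longrightarrow> f v = 0) \<and>
     (\<forall>u v. adj n E t u v \<longrightarrow> f u \<noteq> f v)"

definition recol_adj :: "nat \<Rightarrow> (nat \<Rightarrow> nat \<Rightarrow> bool) \<Rightarrow> nat \<Rightarrow> nat \<Rightarrow> (vtx \<Rightarrow> nat) \<Rightarrow> (vtx \<Rightarrow> nat) \<Rightarrow> bool" where
  "recol_adj n E t k f g \<longleftrightarrow> is_coloring n E t k f \<and> is_coloring n E t k g \<and>
     card {v \<in> Vset n t. f v \<noteq> g v} = 1"

text \<open>A path in C_k(G') from f to g of length len(ps) - 1 (list of its vertices).\<close>
definition recol_path :: "nat \<Rightarrow> (nat \<Rightarrow> nat \<Rightarrow> bool) \<Rightarrow> nat \<Rightarrow> nat \<Rightarrow> (vtx \<Rightarrow> nat) list \<Rightarrow> bool" where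
  "recol_path n E t k ps \<longleftrightarrow> ps \<noteq> [] \<and> distinct ps \<and> (\<forall>p\<in>set ps. is_coloring n E t k p) \<and>
     (\<forall>i. Suc i < length ps \<longrightarrow> recol_adj n E t k (ps ! i) (ps ! Suc i))"

definition alpha_col :: "nat \<Rightarrow> nat \<Rightarrow> vtx \<Rightarrow> nat" where
  "alpha_col n t v = (if v \<in> Vset n t then
     (case v of Gv i \<Rightarrow> i | Bv i j \<Rightarrow> n + i | Cv i m \<Rightarrow> i) else 0)"

definition beta_col :: "nat \<Rightarrow> nat \<Rightarrow> vtx \<Rightarrow> nat" where
  "beta_col n t v = (if v \<in> Vset n t then
     (case v of Gv i \<Rightarrow> i | Bv i j \<Rightarrow> n + j | Cv i m \<Rightarrow> i) else 0)"

end

theory Submission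
  imports Defs
begin

lemma Vset_G[simp]: "Gv i \<in> Vset n t \<longleftrightarrow> i \<in> {1..n}"
  by (auto simp: Vset_def)
lemma Vset_B[simp]: "Bv i j \<in> Vset n t \<longleftrightarrow> i \<in> {1..t} \<and> j \<in> {1..t}"
  by (auto simp: Vset_def)
lemma Vset_C[simp]: "Cv i m \<in> Vset n t \<longleftrightarrow> i \<in> {1..n+t+1} \<and> m \<in> {1..2*t+2*t^2}"
  by (auto simp: Vset_def)

lemma alpha_C: "c \<in> {1..n+t+1} \<Longrightarrow> m \<in> {1..2*t+2*t^2} \<Longrightarrow> alpha_col n t (Cv c m) = c"
  by (simp add: alpha_col_def)
lemma alpha_G: "i \<in> {1..n} \<Longrightarrow> alpha_col n t (Gv i) = i"
  by (simp add: alpha_col_def)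
lemma alpha_B: "i \<in> {1..t} \<Longrightarrow> j \<in> {1..t} \<Longrightarrow> alpha_col n t (Bv i j) = n+i"
  by (simp add: alpha_col_def)
lemma beta_B: "i \<in> {1..t} \<Longrightarrow> j \<in> {1..t} \<Longrightarrow> beta_col n t (Bv i j) = n+j"
  by (simp add: beta_col_def)

lemma card_Cset[simp]: "card ((\<lambda>m. Cv c m) ` S) = card S"
  by (subst card_image) (auto simp: inj_on_def)

context
  fixes n t :: nat and E :: "nat \<Rightarrow> nat \<Rightarrow> bool" and ps :: "(vtx \<Rightarrow> nat) list"
  assumes path: "recol_path n E t (n+t+1) ps"
    and hdp: "hd ps = alpha_col n t" and lastp: "last ps = beta_col n t"
    and lenp: "length ps - 1 \<le> 2*t + 2*t^2"
begin

lemma ne: "ps \<noteq> []" using path by (simp add: recol_path_def)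

lemma colT: "T < length ps \<Longrightarrow> is_coloring n E t (n+t+1) (ps!T)"
  using path by (simp add: recol_path_def)

lemma ps0: "ps!0 = alpha_col n t"
  using hdp ne by (simp add: hd_conv_nth)

lemma psL: "ps!(length ps - 1) = beta_col n t"
  using lastp ne by (simp add: last_conv_nth)

lemma step1: "Suc j < length ps \<Longrightarrow> \<exists>v. {v \<in> Vset n t. (ps!j) v \<noteq> (ps!Suc j) v} = {v}"
  using path unfolding recol_path_def recol_adj_def by (auto simp: card_1_singleton_iff)

lemma changed: "T < length ps \<Longrightarrow> (ps!0) v \<noteq> (ps!T) v \<Longrightarrow> \<exists>j<T. (ps!j) v \<noteq> (ps!Suc j) v"
proof (induction T)
  case 0 then show ?case by simp
next
  case (Suc T)
  show ?case
  proof (cases "(ps!0) v = (ps!T) v")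
    case True then show ?thesis using Suc.prems by auto
  next
    case False then show ?thesis using Suc by (metis Suc_lessD less_SucI)
  qed
qed

lemma cardA: assumes "A \<subseteq> Vset n t" "\<forall>v\<in>A. (ps!0) v \<noteq> (ps!T) v" "T < length ps"
  shows "card A \<le> T"
proof -
  define D where "D j = {v \<in> Vset n t. (ps!j) v \<noteq> (ps!Suc j) v}" for j
  have D1: "card (D j) = 1" if "j < T" for j
  proof -
    have "Suc j < length ps" using that assms(3) by simp
    from step1[OF this] obtain v where "D j = {v}" unfolding D_def by auto
    then show ?thesis by simp
  qed
  have sub: "A \<subseteq> (\<Union>j\<in>{..<T}. D j)"
  proof
    fix v assume v: "v \<in> A"
    then obtain j where "j < T" "(ps!j) v \<noteq> (ps!Suc j) v" using changed assms by blast
    then show "v \<in> (\<Union>j\<in>{..<T}. D j)" using v assms(1) by (auto simp: D_def)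
  qed
  have fin: "finite (\<Union>j\<in>{..<T}. D j)"
    using D1 by (intro finite_UN_I) (auto intro: card_ge_0_finite)
  have "card A \<le> card (\<Union>j\<in>{..<T}. D j)" by (rule card_mono[OF fin sub])
  also have "\<dots> \<le> (\<Sum>j<T. card (D j))" by (rule card_UN_le) simp
  also have "\<dots> = (\<Sum>j<T. 1)" by (rule sum.cong) (auto simp: D1)
  finally show ?thesis by simp
qed

lemma fewchanges: assumes "A \<subseteq> Vset n t" "\<forall>v\<in>A. (ps!0) v \<noteq> (ps!T) v" "T < length ps"
  shows "card A \<le> 2*t+2*t^2"
  using cardA[OF assms] assms(3) lenp by linarith

lemma gcol: assumes T: "T < length ps" and i: "i \<in> {1..n}"
  shows "(ps!T) (Gv i) = i \<or> (ps!T) (Gv i) = n+t+1"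
proof (rule ccontr)
  let ?f = "ps!T" let ?c = "(ps!T) (Gv i)"
  assume nc: "\<not> (?c = i \<or> ?c = n+t+1)"
  have cf: "is_coloring n E t (n+t+1) ?f" using colT T .
  have crange: "?c \<in> {1..n+t+1}" using cf i by (auto simp: is_coloring_def)
  define A where "A = insert (Gv i) ((\<lambda>m. Cv ?c m) ` {1..2*t+2*t^2})"
  have "A \<subseteq> Vset n t" using i crange by (auto simp: A_def)
  moreover have "\<forall>v\<in>A. (ps!0) v \<noteq> (ps!T) v"
  proof
    fix v assume "v \<in> A"
    then consider "v = Gv i" | m where "m \<in> {1..2*t+2*t^2}" "v = Cv ?c m" by (auto simp: A_def)
    then show "(ps!0) v \<noteq> (ps!T) v"
    proof cases
      case 1 then show ?thesis using nc i by (simp add: ps0 alpha_G)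
    next
      case (2 m)
      have "adj n E t (Gv i) (Cv ?c m)" using 2 i crange nc by (auto simp: adj_def)
      then have "?f (Cv ?c m) \<noteq> ?c" using cf unfolding is_coloring_def by metis
      then show ?thesis using 2 crange by (simp add: ps0 alpha_C)
    qed
  qed
  ultimately have "card A \<le> 2*t+2*t^2" using fewchanges T by blast
  moreover have "card A = 2*t+2*t^2 + 1"
    unfolding A_def by (subst card_insert_disjoint) (auto simp: card_Cset)
  ultimately show False by simp
qed

lemma bcol: assumes T: "T < length ps" and ij: "i \<in> {1..t}" "j \<in> {1..t}"
  shows "(ps!T) (Bv i j) \<noteq> n+t+1"
proof
  let ?f = "ps!T"
  assume b: "?f (Bv i j) = n+t+1"
  have cf: "is_coloring n E t (n+t+1) ?f" using colT T .
  define A where "A = insert (Bv i j) ((\<lambda>m. Cv (n+t+1) m) ` {1..2*t+2*t^2})"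
  have "A \<subseteq> Vset n t" using ij by (auto simp: A_def)
  moreover have "\<forall>v\<in>A. (ps!0) v \<noteq> (ps!T) v"
  proof
    fix v assume "v \<in> A"
    then consider "v = Bv i j" | m where "m \<in> {1..2*t+2*t^2}" "v = Cv (n+t+1) m" by (auto simp: A_def)
    then show "(ps!0) v \<noteq> (ps!T) v"
    proof cases
      case 1 then show ?thesis using ij b by (simp add: ps0 alpha_B)
    next
      case (2 m)
      have "adj n E t (Bv i j) (Cv (n+t+1) m)" using 2 ij by (auto simp: adj_def)
      then have "?f (Cv (n+t+1) m) \<noteq> n+t+1" using cf b unfolding is_coloring_def by metis
      then show ?thesis using 2 by (simp add: ps0 alpha_C)
    qed
  qed
  ultimately have "card A \<le> 2*t+2*t^2" using fewchanges T by blast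
  moreover have "card A = 2*t+2*t^2 + 1"
    unfolding A_def by (subst card_insert_disjoint) (auto simp: card_Cset)
  ultimately show False by simp
qed

lemma mainlem: assumes t2: "t \<ge> 2"
  shows "\<exists>S. independent_set n E S \<and> card S \<ge> t - 1"
proof -
  define bad where "bad T \<longleftrightarrow> (\<exists>r\<in>{1..t}. \<forall>a\<in>{1..t}. \<forall>a'\<in>{1..t}. a \<noteq> a' \<longrightarrow> (ps!T) (Bv r a) \<noteq> (ps!T) (Bv r a'))" for T
  let ?L = "length ps - 1"
  have badL: "bad ?L" unfolding bad_def psL using t2 by (auto simp: beta_B intro!: bexI[of _ 1])
  have notbad0: "\<not> bad 0"
  proof
    assume "bad 0"
    then obtain r where r: "r\<in>{1..t}" "\<forall>a\<in>{1..t}. \<forall>a'\<in>{1..t}. a \<noteq> a' \<longrightarrow> (ps!0) (Bv r a) \<noteq> (ps!0) (Bv r a')"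
      unfolding bad_def by blast
    then have "(ps!0) (Bv r 1) \<noteq> (ps!0) (Bv r 2)" using t2 by auto
    then show False using r(1) t2 by (simp add: ps0 alpha_B)
  qed
  define T where "T = (LEAST T. bad T)"
  have T1: "bad T" unfolding T_def by (rule LeastI[of bad, OF badL])
  have T2: "\<forall>T'<T. \<not> bad T'" unfolding T_def by (intro allI impI) (rule not_less_Least)
  note T = T1 T2
  have "T \<le> ?L" unfolding T_def by (rule Least_le[of bad, OF badL])
  then have TL: "T < length ps" using ne by (cases ps) auto
  have T0: "T \<noteq> 0"
  proof
    assume "T = 0"
    then have "bad 0" using T1 by simp
    then show False using notbad0 by simp
  qed
  define f where "f = ps!T"
  define g where "g = ps!(T-1)"
  have cf: "is_coloring n E t (n+t+1) f" using colT TL f_def by simp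
  obtain v0 where v0: "{v \<in> Vset n t. g v \<noteq> f v} = {v0}"
    using step1[of "T-1"] TL T0 unfolding f_def g_def by auto
  have same: "v \<in> Vset n t \<Longrightarrow> v \<noteq> v0 \<Longrightarrow> g v = f v" for v
    using v0 by blast
  obtain r where r: "r\<in>{1..t}" "\<forall>a\<in>{1..t}. \<forall>a'\<in>{1..t}. a \<noteq> a' \<longrightarrow> f (Bv r a) \<noteq> f (Bv r a')"
    using T(1) unfolding bad_def f_def by blast
  have gpairs: "\<forall>i\<in>{1..t}. \<exists>a\<in>{1..t}. \<exists>a'\<in>{1..t}. a \<noteq> a' \<and> g (Bv i a) = g (Bv i a')"
  proof -
    have "\<not> bad (T-1)" using T(2) T0 by simp
    then show ?thesis unfolding bad_def g_def by blast
  qed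
  obtain x0 where x0: "v0 = Bv r x0"
  proof -
    obtain a a' where aa: "a\<in>{1..t}" "a'\<in>{1..t}" "a \<noteq> a'" "g (Bv r a) = g (Bv r a')"
      using gpairs r(1) by blast
    have "f (Bv r a) \<noteq> f (Bv r a')" using r aa by blast
    then have "Bv r a = v0 \<or> Bv r a' = v0"
    proof (rule contrapos_pp)
      assume "\<not> (Bv r a = v0 \<or> Bv r a' = v0)"
      then have "g (Bv r a) = f (Bv r a)" "g (Bv r a') = f (Bv r a')"
        using same[of "Bv r a"] same[of "Bv r a'"] aa r(1) by auto
      then show "\<not> f (Bv r a) \<noteq> f (Bv r a')" using aa(4) by simp
    qed
    then show ?thesis using that by blast
  qed
  have goodrows: "\<forall>i\<in>{1..t}-{r}. \<exists>a\<in>{1..t}. \<exists>a'\<in>{1..t}. a \<noteq> a' \<and> f (Bv i a) = f (Bv i a')"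
  proof
    fix i assume i: "i \<in> {1..t}-{r}"
    obtain a a' where aa: "a\<in>{1..t}" "a'\<in>{1..t}" "a \<noteq> a'" "g (Bv i a) = g (Bv i a')"
      using gpairs i by blast
    have "g (Bv i a) = f (Bv i a)" "g (Bv i a') = f (Bv i a')"
      using same[of "Bv i a"] same[of "Bv i a'"] aa i x0 by auto
    then show "\<exists>a\<in>{1..t}. \<exists>a'\<in>{1..t}. a \<noteq> a' \<and> f (Bv i a) = f (Bv i a')" using aa by metis
  qed
  have propB: "f (Bv i j) \<noteq> f (Bv i' j')"
    if "i\<in>{1..t}" "j\<in>{1..t}" "i'\<in>{1..t}" "j'\<in>{1..t}" "i \<noteq> i'" "j \<noteq> j'" for i j i' j'
  proof -
    have "adj n E t (Bv i j) (Bv i' j')" using that by (auto simp: adj_def)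
    then show ?thesis using cf unfolding is_coloring_def by blast
  qed
  have rowL: "i2 = i" if "i\<in>{1..t}" "a\<in>{1..t}" "a'\<in>{1..t}" "i2\<in>{1..t}" "a2\<in>{1..t}"
    "a \<noteq> a'" "f (Bv i a) = f (Bv i a')" "f (Bv i2 a2) = f (Bv i a)" for i a a' i2 a2
  proof (rule ccontr)
    assume ne: "i2 \<noteq> i"
    have "a2 = a" using propB[of i a i2 a2] that ne by auto
    then show False using propB[of i a' i2 a2] that ne by auto
  qed
  have colL: "j2 = j" if "j\<in>{1..t}" "b\<in>{1..t}" "b'\<in>{1..t}" "j2\<in>{1..t}" "b2\<in>{1..t}"
    "b \<noteq> b'" "f (Bv b j) = f (Bv b' j)" "f (Bv b2 j2) = f (Bv b j)" for j b b' j2 b2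
  proof (rule ccontr)
    assume ne: "j2 \<noteq> j"
    have "b2 = b" using propB[of b j b2 j2] that ne by auto
    then show False using propB[of b' j b2 j2] that ne by auto
  qed
  define S where "S = {c\<in>{1..n}. f (Gv c) = n+t+1}"
  define U where "U = {n+1..n+t} \<union> S"
  have finU: "finite U" unfolding U_def S_def by auto
  have cardU: "card U \<le> t + card S"
    unfolding U_def using card_Un_le[of "{n+1..n+t}" S] by simp
  have inU: "f (Bv i j) \<in> U" if "i\<in>{1..t}" "j\<in>{1..t}" for i j
  proof -
    let ?x = "f (Bv i j)"
    have "?x \<in> {1..n+t+1}" using cf that unfolding is_coloring_def by auto
    moreover have "?x \<noteq> n+t+1" using bcol[OF TL that] f_def by simp
    moreover have "?x \<in> S" if "?x \<in> {1..n}"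
    proof -
      have "adj n E t (Gv ?x) (Bv i j)" using that \<open>i\<in>{1..t}\<close> \<open>j\<in>{1..t}\<close> by (auto simp: adj_def)
      then have "f (Gv ?x) \<noteq> ?x" using cf unfolding is_coloring_def by metis
      then show ?thesis using gcol[OF TL that] f_def S_def that by auto
    qed
    ultimately show ?thesis unfolding U_def by (cases "?x \<le> n") auto
  qed
  have indep: "independent_set n E S"
    unfolding independent_set_def
  proof (intro conjI ballI)
    show "S \<subseteq> {1..n}" unfolding S_def by auto
    fix i j assume ij: "i \<in> S" "j \<in> S"
    show "\<not> E i j"
    proof
      assume "E i j"
      then have "adj n E t (Gv i) (Gv j)" using ij by (auto simp: adj_def S_def)
      then have "f (Gv i) \<noteq> f (Gv j)" using cf unfolding is_coloring_def by blast
      then show False using ij by (auto simp: S_def)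
    qed
  qed
  have big: "2*t - 1 \<le> card U"
  proof (cases "\<exists>c\<in>{1..t}. \<forall>b\<in>{1..t}. \<forall>b'\<in>{1..t}. b \<noteq> b' \<longrightarrow> f (Bv b c) \<noteq> f (Bv b' c)")
    case True
    then obtain c where c: "c\<in>{1..t}" "\<forall>b\<in>{1..t}. \<forall>b'\<in>{1..t}. b \<noteq> b' \<longrightarrow> f (Bv b c) \<noteq> f (Bv b' c)"
      by blast
    define W1 where "W1 = (\<lambda>a. f (Bv r a)) ` {1..t}"
    define W2 where "W2 = (\<lambda>i. f (Bv i c)) ` ({1..t}-{r})"
    have c1: "card W1 = t" unfolding W1_def
      by (subst card_image) (use r in \<open>auto simp: inj_on_def\<close>)
    have c2: "card W2 = t - 1" unfolding W2_def
      by (subst card_image) (use c r in \<open>auto simp: inj_on_def\<close>)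
    have disj: "W1 \<inter> W2 = {}"
    proof (rule ccontr)
      assume "W1 \<inter> W2 \<noteq> {}"
      then obtain x where x: "x \<in> W1" "x \<in> W2" by blast
      from x(1) obtain a where a: "a\<in>{1..t}" "x = f (Bv r a)" unfolding W1_def by blast
      from x(2) obtain i where i: "i\<in>{1..t}-{r}" "x = f (Bv i c)" unfolding W2_def by blast
      have ai: "a\<in>{1..t}" "i\<in>{1..t}" "i \<noteq> r" "f (Bv r a) = f (Bv i c)"
        using a i by auto
      show False
      proof (cases "a = c")
        case True then show ?thesis using c ai r(1) by metis
      next
        case False then show ?thesis using propB[of r a i c] ai r(1) c(1) by auto
      qed
    qed
    have "W1 \<union> W2 \<subseteq> U" unfolding W1_def W2_def using inU r(1) c(1) by auto
    then have "card (W1 \<union> W2) \<le> card U" using finU card_mono by blast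
    moreover have "card (W1 \<union> W2) = t + (t - 1)"
      using card_Un_disjoint[of W1 W2] disj c1 c2 unfolding W1_def W2_def by auto
    ultimately show ?thesis using t2 by linarith
  next
    case False
    then have "\<forall>c\<in>{1..t}. \<exists>b. b\<in>{1..t} \<and> (\<exists>b'\<in>{1..t}. b \<noteq> b' \<and> f (Bv b c) = f (Bv b' c))"
      by blast
    then obtain bq where bq: "\<forall>c\<in>{1..t}. bq c\<in>{1..t} \<and> (\<exists>b'\<in>{1..t}. bq c \<noteq> b' \<and> f (Bv (bq c) c) = f (Bv b' c))"
      by metis
    obtain ap where ap: "\<forall>i\<in>{1..t}-{r}. ap i\<in>{1..t} \<and> (\<exists>a'\<in>{1..t}. ap i \<noteq> a' \<and> f (Bv i (ap i)) = f (Bv i a'))"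
      using goodrows by metis
    define p where "p i = f (Bv i (ap i))" for i
    define q where "q c = f (Bv (bq c) c)" for c
    have injp: "inj_on p ({1..t}-{r})"
    proof (rule inj_onI)
      fix i i' assume i: "i \<in> {1..t}-{r}" and i': "i' \<in> {1..t}-{r}" and e: "p i = p i'"
      obtain a' where a': "a'\<in>{1..t}" "ap i \<noteq> a'" "f (Bv i (ap i)) = f (Bv i a')" using ap i by blast
      show "i = i'" using rowL[of i "ap i" a' i' "ap i'"] a' i i' ap e unfolding p_def by auto
    qed
    have injq: "inj_on q {1..t}"
    proof (rule inj_onI)
      fix c c' assume c: "c \<in> {1..t}" and c': "c' \<in> {1..t}" and e: "q c = q c'"
      obtain b' where b': "b'\<in>{1..t}" "bq c \<noteq> b'" "f (Bv (bq c) c) = f (Bv b' c)" using bq c by blast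
      show "c = c'" using colL[of c "bq c" b' c' "bq c'"] b' c c' bq e unfolding q_def by auto
    qed
    have disj: "p ` ({1..t}-{r}) \<inter> q ` {1..t} = {}"
    proof (rule ccontr)
      assume "p ` ({1..t}-{r}) \<inter> q ` {1..t} \<noteq> {}"
      then obtain x where x: "x \<in> p ` ({1..t}-{r})" "x \<in> q ` {1..t}" by blast
      from x(1) obtain i where i: "i\<in>{1..t}-{r}" "x = p i" by blast
      from x(2) obtain c where c: "c\<in>{1..t}" "x = q c" by blast
      have ic: "i \<in> {1..t}-{r}" "c \<in> {1..t}" "p i = q c" using i c by auto
      obtain a' where a': "a'\<in>{1..t}" "ap i \<noteq> a'" "f (Bv i (ap i)) = f (Bv i a')" using ap ic by blast
      obtain b' where b': "b'\<in>{1..t}" "bq c \<noteq> b'" "f (Bv (bq c) c) = f (Bv b' c)" using bq ic by blast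
      have "bq c = i" using rowL[of i "ap i" a' "bq c" c] a' ic ap bq unfolding p_def q_def by auto
      moreover have "b' = i" using rowL[of i "ap i" a' b' c] a' b' ic ap bq unfolding p_def q_def by auto
      ultimately show False using b' by simp
    qed
    have "p ` ({1..t}-{r}) \<union> q ` {1..t} \<subseteq> U"
    proof
      fix x assume "x \<in> p ` ({1..t}-{r}) \<union> q ` {1..t}"
      then show "x \<in> U"
      proof
        assume "x \<in> p ` ({1..t}-{r})"
        then obtain i where i: "i \<in> {1..t}-{r}" "x = p i" by blast
        have "ap i \<in> {1..t}" using ap i(1) by blast
        then show ?thesis using inU[of i "ap i"] i unfolding p_def by blast
      next
        assume "x \<in> q ` {1..t}"
        then obtain c where c: "c \<in> {1..t}" "x = q c" by blast
        have "bq c \<in> {1..t}" using bq c(1) by blast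
        then show ?thesis using inU[of "bq c" c] c unfolding q_def by blast
      qed
    qed
    then have "card (p ` ({1..t}-{r}) \<union> q ` {1..t}) \<le> card U" using finU card_mono by blast
    moreover have "card (p ` ({1..t}-{r}) \<union> q ` {1..t}) = (t - 1) + t"
      using card_Un_disjoint[of "p ` ({1..t}-{r})" "q ` {1..t}"] disj
        card_image[OF injp] card_image[OF injq] r(1) by auto
    ultimately show ?thesis using t2 by linarith
  qed
  have "t - 1 \<le> card S" using big cardU t2 by linarith
  then show ?thesis using indep by blast
qed

end

theorem mainTheorem4:
  fixes n t :: nat and E :: "nat \<Rightarrow> nat \<Rightarrow> bool"
  assumes "is_graph n E" and "t \<ge> 1"
    and "\<exists>ps. recol_path n E t (n+t+1) ps \<and> hd ps = alpha_col n t \<and> last ps = beta_col n t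
              \<and> length ps - 1 \<le> 2*t + 2*t^2"
  shows "\<exists>S. independent_set n E S \<and> card S \<ge> t - 1"
proof (cases "t \<ge> 2")
  case True
  from assms(3) obtain ps where "recol_path n E t (n+t+1) ps" "hd ps = alpha_col n t"
    "last ps = beta_col n t" "length ps - 1 \<le> 2*t + 2*t^2" by blast
  from mainlem[OF this True] show ?thesis .
next
  case False
  then have "t - 1 = 0" by simp
  moreover have "independent_set n E {}" by (simp add: independent_set_def)
  ultimately show ?thesis by (metis card.empty le_refl)
qed

end
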